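(* Let $X$ be a set and $z$ an element not contained in $X$. Every rack (resp. quandle) on $X$ embeds into a rack (resp. quandle) on $X\cup\{z\}$, i.e., is a subrack (resp. subquandle) of some rack (resp. quandle) defined on $X\cup\{z\}$.
   Context: A rack is a groupoid $(X,* )$ whose left translations $y\mapsto x*y$ are bijections and which satisfies $x*(y*z)=(x*y)*(x*z)$; a quandle is a rack satisfying $x*x=x$. *)

theory Defs
  imports Main
begin

definition rack :: "('a \<Rightarrow> 'a \<Rightarrow> 'a) \<Rightarrow> 'a set \<Rightarrow> bool" where
  "rack op X \<longleftrightarrow>
     (\<forall>x\<in>X. \<forall>y\<in>X. op x y \<in> X) \<and>
     (\<forall>x\<in>X. bij_betw (\<lambda>y. op x y) X X) \<and>
     (\<forall>x\<in>X. \<forall>y\<in>X. \<forall>z\<in>X. op x (op y z) = op (op x y) (op x z))"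

definition quandle :: "('a \<Rightarrow> 'a \<Rightarrow> 'a) \<Rightarrow> 'a set \<Rightarrow> bool" where
  "quandle op X \<longleftrightarrow> rack op X \<and> (\<forall>x\<in>X. op x x = x)"

definition subrack :: "('a \<Rightarrow> 'a \<Rightarrow> 'a) \<Rightarrow> 'a set \<Rightarrow> ('a \<Rightarrow> 'a \<Rightarrow> 'a) \<Rightarrow> 'a set \<Rightarrow> bool" where
  "subrack op X op' Y \<longleftrightarrow> X \<subseteq> Y \<and> (\<forall>x\<in>X. \<forall>y\<in>X. op' x y = op x y)"

end

theory Submission
  imports Defs
begin

lemma ext_rack:
  assumes z: "z \<notin> X" and r: "rack op X"
  defines "op' \<equiv> (\<lambda>a b. if a \<in> X \<and> b \<in> X then op a b else b)"
  shows "rack op' (insert z X) \<and> subrack op X op' (insert z X)"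
proof -
  have cl: "\<forall>x\<in>X. \<forall>y\<in>X. op x y \<in> X" and bj: "\<forall>x\<in>X. bij_betw (\<lambda>y. op x y) X X"
    and ds: "\<forall>x\<in>X. \<forall>y\<in>X. \<forall>w\<in>X. op x (op y w) = op (op x y) (op x w)"
    using r unfolding rack_def by blast+
  have b: "bij_betw (\<lambda>y. op' x y) (insert z X) (insert z X)" if x: "x \<in> insert z X" for x
  proof (cases "x = z")
    case True
    then have "(\<lambda>y. op' x y) = id" using z unfolding op'_def by auto
    then show ?thesis using bij_betw_id[of "insert z X"] by (simp only:)
  next
    case False
    then have xX: "x \<in> X" using x by auto
    have b1: "bij_betw (\<lambda>y. op' x y) X X"
    proof -
      have e: "bij_betw (op' x) X X = bij_betw (op x) X X"
        by (rule bij_betw_cong) (simp add: op'_def xX)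
      have "bij_betw (op x) X X" using bj xX by blast
      then show ?thesis using e by (simp only:)
    qed
    have oz: "op' x z = z" using z unfolding op'_def by auto
    moreover have "bij_betw (\<lambda>y. op' x y) (X \<union> {z}) (X \<union> {op' x z})"
      using notIn_Un_bij_betw3[of z X "\<lambda>y. op' x y" X] b1 z oz by (metis (no_types))
    ultimately show ?thesis by (metis insert_is_Un sup_commute)
  qed
  have "rack op' (insert z X)"
    unfolding rack_def
  proof (intro conjI ballI)
    fix x y assume "x \<in> insert z X" "y \<in> insert z X"
    then show "op' x y \<in> insert z X" using cl by (cases "x \<in> X \<and> y \<in> X") (simp_all add: op'_def)
  next
    fix x assume "x \<in> insert z X"
    then show "bij_betw (op' x) (insert z X) (insert z X)" by (rule b)
  next
    fix x y w assume h: "x \<in> insert z X" "y \<in> insert z X" "w \<in> insert z X"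
    show "op' x (op' y w) = op' (op' x y) (op' x w)"
    proof (cases "x \<in> X \<and> y \<in> X \<and> w \<in> X")
      case True
      then have "op x (op y w) = op (op x y) (op x w)" "op y w \<in> X" "op x y \<in> X" "op x w \<in> X"
        using ds cl by blast+
      then show ?thesis using True unfolding op'_def by (simp only: if_True simp_thms)
    next
      case False
      then consider "x = z" | "x \<in> X" "y = z" | "x \<in> X" "y \<in> X" "w = z" using h by blast
      then show ?thesis
      proof cases
        case 1 then show ?thesis using z unfolding op'_def by simp
      next
        case 2 then show ?thesis using z cl h unfolding op'_def by simp
      next
        case 3 then show ?thesis using z cl unfolding op'_def by simp
      qed
    qed
  qed
  moreover have "subrack op X op' (insert z X)"
    unfolding subrack_def op'_def by auto
  ultimately show ?thesis by blast
qed

theorem proposition3p9: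
  fixes X :: "'a set" and z :: 'a
  assumes "z \<notin> X"
  shows "(\<forall>op. rack op X \<longrightarrow>
            (\<exists>op'. rack op' (insert z X) \<and> subrack op X op' (insert z X)))
       \<and> (\<forall>op. quandle op X \<longrightarrow>
            (\<exists>op'. quandle op' (insert z X) \<and> subrack op X op' (insert z X)))"
proof (intro conjI allI impI)
  fix op assume "rack op X"
  then show "\<exists>op'. rack op' (insert z X) \<and> subrack op X op' (insert z X)"
    using ext_rack[OF assms] by blast
next
  fix op assume q: "quandle op X"
  let ?o = "(\<lambda>a b. if a \<in> X \<and> b \<in> X then op a b else b)"
  have "rack ?o (insert z X) \<and> subrack op X ?o (insert z X)"
    using ext_rack[OF assms] q unfolding quandle_def by blast
  moreover have "\<forall>x\<in>insert z X. ?o x x = x" using q unfolding quandle_def by auto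
  ultimately show "\<exists>op'. quandle op' (insert z X) \<and> subrack op X op' (insert z X)"
    unfolding quandle_def by blast
qed

end
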